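(* Let $A$ be a real $n\times n$ matrix with strictly negative diagonal entries and clique complex $X(G_A)$. Suppose $\det A_\sigma=0$ for every clique $\sigma\in X(G_A)$ with $|\sigma|=2$ or $|\sigma|=3$. Then the sign matrix $\mathcal{E}_A$ is symmetric, and $A_{ii}A_{jj}=A_{ij}A_{ji}$ for every clique $\{i,j\}\in X(G_A)$ with $i\ne j$, and $A_{ii}A_{jj}A_{kk}=A_{ij}A_{jk}A_{ki}$ for every clique $\{i,j,k\}\in X(G_A)$ with $i,j,k$ distinct. (In particular $A_{ij}\neq0$ for every edge $(ij)$ of $G_A$.)
   Context: The sign matrix $\mathcal{E}_A$ has entries equal to the signs ($1,-1,0$) of the entries of $A$. The connectivity graph $G_A$ is the simple graph on $\{1,\dots,n\}$ containing edge $(ij)$, $i\ne j$, unless $A_{ij}=A_{ji}=0$; $X(G_A)$ is the set of its cliques (sets of pairwise adjacent vertices). $A_\sigma$ denotes the principal submatrix of $A$ on index set $\sigma$. *)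

theory Defs
  imports "HOL-Analysis.Analysis"
begin

definition sign_matrix :: "real^'n^'n \<Rightarrow> real^'n^'n" where
  "sign_matrix A = (\<chi> i j. sgn (A $ i $ j))"

definition conn_edge :: "real^'n^'n \<Rightarrow> 'n \<Rightarrow> 'n \<Rightarrow> bool" where
  "conn_edge A i j \<longleftrightarrow> i \<noteq> j \<and> \<not> (A $ i $ j = 0 \<and> A $ j $ i = 0)"

definition cliques :: "real^'n^'n \<Rightarrow> 'n set set" where
  "cliques A = {\<sigma>. \<forall>i\<in>\<sigma>. \<forall>j\<in>\<sigma>. i \<noteq> j \<longrightarrow> conn_edge A i j}"

definition principal_det :: "real^'n^'n \<Rightarrow> 'n set \<Rightarrow> real" where
  "principal_det A \<sigma> =
     (\<Sum>p\<in>{p. p permutes \<sigma>}. of_int (sign p) * (\<Prod>i\<in>\<sigma>. A $ i $ p i))"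

end

theory Submission
  imports Defs
begin

lemma pdet2:
  assumes "i \<noteq> j"
  shows "principal_det A {i, j} = A$i$i * A$j$j - A$i$j * A$j$i"
proof -
  have f: "finite {j}" "i \<notin> {j}" using assms by auto
  show ?thesis
    unfolding principal_det_def
    unfolding sum_over_permutations_insert[OF f]
    unfolding permutes_sing
    using assms by (simp add: sign_swap_id sign_id swap_id_eq)
qed

lemma pdet3:
  assumes "i \<noteq> j" "j \<noteq> k" "i \<noteq> k"
  shows "principal_det A {i, j, k} =
    A$i$i * A$j$j * A$k$k +
    A$i$j * A$j$k * A$k$i +
    A$i$k * A$j$i * A$k$j -
    A$i$i * A$j$k * A$k$j -
    A$i$j * A$j$i * A$k$k -
    A$i$k * A$j$j * A$k$i"
proof -
  have f1: "finite {j, k}" "i \<notin> {j, k}" using assms by auto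
  have f2: "finite {k}" "j \<notin> {k}" using assms by auto
  show ?thesis
    unfolding principal_det_def
    unfolding sum_over_permutations_insert[OF f1]
    unfolding sum_over_permutations_insert[OF f2]
    unfolding permutes_sing
    using assms by (simp add: sign_swap_id permutation_swap_id sign_compose sign_id swap_id_eq algebra_simps)
qed

theorem mainTheorem9:
  fixes A :: "real^'n^'n"
  assumes diag: "\<And>i. A $ i $ i < 0"
    and dets: "\<And>\<sigma>. \<sigma> \<in> cliques A \<Longrightarrow> card \<sigma> = 2 \<or> card \<sigma> = 3 \<Longrightarrow>
                 principal_det A \<sigma> = 0"
  shows "transpose (sign_matrix A) = sign_matrix A
    \<and> (\<forall>i j. {i, j} \<in> cliques A \<and> i \<noteq> j \<longrightarrow>
            A $ i $ i * A $ j $ j = A $ i $ j * A $ j $ i)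
    \<and> (\<forall>i j k. {i, j, k} \<in> cliques A \<and> i \<noteq> j \<and> j \<noteq> k \<and> i \<noteq> k \<longrightarrow>
            A $ i $ i * A $ j $ j * A $ k $ k = A $ i $ j * A $ j $ k * A $ k $ i)
    \<and> (\<forall>i j. conn_edge A i j \<longrightarrow> A $ i $ j \<noteq> 0)"
proof -
  have two: "A$i$i * A$j$j = A$i$j * A$j$i" if "conn_edge A i j" for i j
  proof -
    have ij: "i \<noteq> j" using that by (simp add: conn_edge_def)
    have "{i,j} \<in> cliques A" using that
      by (auto simp: cliques_def conn_edge_def)
    moreover have "card {i,j} = 2" using ij by simp
    ultimately have "principal_det A {i,j} = 0" using dets by blast
    thus ?thesis using pdet2[OF ij] by simp
  qed
  have pos: "A$i$j * A$j$i > 0" if "conn_edge A i j" for i j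
  proof -
    have "A$i$i * A$j$j > 0" using diag[of i] diag[of j] by (simp add: mult_neg_neg)
    thus ?thesis using two[OF that] by simp
  qed
  have sym: "conn_edge A i j \<Longrightarrow> conn_edge A j i" for i j
    by (auto simp: conn_edge_def)
  have edge_nz: "\<forall>i j. conn_edge A i j \<longrightarrow> A $ i $ j \<noteq> 0"
    using pos by fastforce
  have sgn_eq: "sgn (A$j$i) = sgn (A$i$j)" for i j
  proof (cases "conn_edge A i j")
    case True
    have "A$i$j * A$j$i > 0" using pos[OF True] .
    thus ?thesis by (auto simp: zero_less_mult_iff sgn_if)
  next
    case False
    thus ?thesis by (cases "i = j") (auto simp: conn_edge_def)
  qed
  have T: "transpose (sign_matrix A) = sign_matrix A"
    by (simp add: transpose_def sign_matrix_def vec_eq_iff sgn_eq)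
  have C2: "\<forall>i j. {i, j} \<in> cliques A \<and> i \<noteq> j \<longrightarrow>
            A $ i $ i * A $ j $ j = A $ i $ j * A $ j $ i"
    using two by (auto simp: cliques_def)
  have C3: "A $ i $ i * A $ j $ j * A $ k $ k = A $ i $ j * A $ j $ k * A $ k $ i"
    if c: "{i, j, k} \<in> cliques A" and d: "i \<noteq> j" "j \<noteq> k" "i \<noteq> k" for i j k
  proof -
    have e: "conn_edge A i j" "conn_edge A j k" "conn_edge A i k"
      using c d by (auto simp: cliques_def)
    have "card {i,j,k} = 3" using d by simp
    hence "principal_det A {i,j,k} = 0" using dets c by blast
    hence D: "A$i$i * A$j$j * A$k$k +
    A$i$j * A$j$k * A$k$i +
    A$i$k * A$j$i * A$k$j -
    A$i$i * A$j$k * A$k$j -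
    A$i$j * A$j$i * A$k$k -
    A$i$k * A$j$j * A$k$i = 0" using pdet3[OF d] by simp
    define a b c where "a = A$i$i" "b = A$j$j" "c = A$k$k"
    define P Q where "P = A $ i $ j * A $ j $ k * A $ k $ i" "Q = A$i$k * A$j$i * A$k$j"
    have h1: "A$i$j * A$j$i = a*b" using two[OF e(1)] a_b_c_def by simp
    have h2: "A$j$k * A$k$j = b*c" using two[OF e(2)] a_b_c_def by simp
    have h3: "A$i$k * A$k$i = a*c" using two[OF e(3)] a_b_c_def by simp
    have s: "P + Q = 2*(a*b*c)"
    proof -
      have "A$i$i * A$j$k * A$k$j = a*(b*c)" using h2 a_b_c_def by simp
      moreover have "A$i$j * A$j$i * A$k$k = (a*b)*c" using h1 a_b_c_def by simp
      moreover have "A$i$k * A$j$j * A$k$i = (a*c)*b" using h3 a_b_c_def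
        by (metis mult.assoc mult.commute)
      moreover have "P + Q = A$i$i * A$j$k * A$k$j + A$i$j * A$j$i * A$k$k
          + A$i$k * A$j$j * A$k$i - A$i$i * A$j$j * A$k$k"
        using D unfolding P_Q_def by linarith
      moreover have "A$i$i * A$j$j * A$k$k = a*b*c" using a_b_c_def by simp
      ultimately show ?thesis by (simp add: algebra_simps)
    qed
    have p: "P * Q = (a*b*c)^2"
    proof -
      have "P * Q = (A$i$j * A$j$i) * (A$j$k * A$k$j) * (A$i$k * A$k$i)"
        unfolding P_Q_def by (simp add: algebra_simps)
      thus ?thesis using h1 h2 h3 by (simp add: power2_eq_square algebra_simps)
    qed
    have "(P - a*b*c)^2 = 0"
    proof -
      have "(P - a*b*c)^2 = P*P - (P+Q)*P + P*Q" using s p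
        by (simp add: power2_eq_square algebra_simps)
      also have "... = 0" by (simp add: algebra_simps)
      finally show ?thesis .
    qed
    hence "P = a*b*c" by simp
    thus ?thesis unfolding P_Q_def a_b_c_def by simp
  qed
  show ?thesis using T C2 C3 edge_nz by blast
qed

end
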